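(* Let $S,T$ be disjoint finite sets with a total order $\prec$ on $S\cup T$ in which every element of $S$ precedes every element of $T$. Let $R\subseteq S\times T$ be a relation such that if $(s,t)\in R$, then $(s',t')\in R$ for all $s'\in S,t'\in T$ with $s\preceq s'\prec t'\preceq t$. Let $y:R\to\mathbb{R}_{\ge0}$ with $\gamma:=\sum_{(s,t)\in R}y_{s,t}>0$. Define $$s^*=\max_{\prec}\Big\{s\in S:\ \sum_{s'\succeq s}\ \sum_{t:(s',t)\in R}y_{s',t}\ge \gamma/2\Big\},\qquad t^*=\min_{\prec}\Big\{t\in T:\ \sum_{t'\preceq t}\ \sum_{s:(s,t')\in R}y_{s,t'}\ge\gamma/2\Big\},$$ and $\tilde S=\{s\in S: s\succeq s^*\}$, $\tilde T=\{t\in T: t\preceq t^*\}$. Then $\tilde S\times\tilde T\subseteq R$.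
   Context: $\preceq$ denotes the reflexive version of the total order $\prec$; $\max_\prec$ and $\min_\prec$ denote the largest and smallest element with respect to $\prec$. *)

theory Defs
  imports Complex_Main
begin

end

theory Submission
  imports Defs
begin

lemma rowsum:
  fixes R :: "('a \<times> 'a) set" and y :: "'a \<times> 'a \<Rightarrow> real"
  assumes "finite R" "finite U"
  shows "(\<Sum>s'\<in>U. \<Sum>t\<in>{t. (s',t)\<in>R}. y (s',t)) = (\<Sum>p\<in>{p\<in>R. fst p \<in> U}. y p)"
proof -
  have e: "{p\<in>R. fst p \<in> U} = Sigma U (\<lambda>s'. {t. (s',t)\<in>R})" by auto
  have fin: "\<forall>s'\<in>U. finite {t. (s',t)\<in>R}"
  proof
    fix s' assume "s' \<in> U"
    have "{t. (s',t)\<in>R} \<subseteq> snd ` R" by force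
    thus "finite {t. (s',t)\<in>R}" using assms(1) finite_subset by blast
  qed
  show ?thesis unfolding e using sum.Sigma[OF assms(2) fin, of "\<lambda>a b. y (a,b)"]
    by (simp add: case_prod_beta')
qed

lemma colsum:
  fixes R :: "('a \<times> 'a) set" and y :: "'a \<times> 'a \<Rightarrow> real"
  assumes "finite R" "finite U"
  shows "(\<Sum>t'\<in>U. \<Sum>s\<in>{s. (s,t')\<in>R}. y (s,t')) = (\<Sum>p\<in>{p\<in>R. snd p \<in> U}. y p)"
proof -
  have f: "finite (prod.swap ` R)" using assms(1) by simp
  have "(\<Sum>t'\<in>U. \<Sum>s\<in>{s. (s,t')\<in>R}. y (s,t'))
      = (\<Sum>t'\<in>U. \<Sum>s\<in>{s. (t',s)\<in>prod.swap ` R}. (y \<circ> prod.swap) (t',s))"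
    by (intro sum.cong) (auto simp: image_iff intro!: bexI[where x="(_,_)"])
  also have "\<dots> = (\<Sum>p\<in>{p\<in>prod.swap ` R. fst p \<in> U}. (y \<circ> prod.swap) p)"
    by (rule rowsum[OF f assms(2)])
  also have "{p\<in>prod.swap ` R. fst p \<in> U} = prod.swap ` {p\<in>R. snd p \<in> U}" by force
  also have "(\<Sum>p\<in>prod.swap ` {p\<in>R. snd p \<in> U}. (y \<circ> prod.swap) p) = (\<Sum>p\<in>{p\<in>R. snd p \<in> U}. y p)"
    by (subst sum.reindex) (auto simp: inj_on_def)
  finally show ?thesis .
qed

theorem lemmaB2:
  fixes S T :: "'a::linorder set" and R :: "('a \<times> 'a) set" and y :: "'a \<times> 'a \<Rightarrow> real"
    and \<gamma> :: real and sstar tstar :: 'a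
  assumes finS: "finite S" and finT: "finite T"
    and disj: "S \<inter> T = {}"
    and ST: "\<forall>s\<in>S. \<forall>t\<in>T. s < t"
    and RST: "R \<subseteq> S \<times> T"
    and Rclosed: "\<And>s t s' t'. (s, t) \<in> R \<Longrightarrow> s' \<in> S \<Longrightarrow> t' \<in> T \<Longrightarrow>
                   s \<le> s' \<Longrightarrow> s' < t' \<Longrightarrow> t' \<le> t \<Longrightarrow> (s', t') \<in> R"
    and ynonneg: "\<forall>p\<in>R. y p \<ge> 0"
    and gamma_def: "\<gamma> = (\<Sum>p\<in>R. y p)"
    and gamma_pos: "\<gamma> > 0"
    and sstar_def: "sstar = Max {s \<in> S. (\<Sum>s'\<in>{s'\<in>S. s' \<ge> s}. \<Sum>t\<in>{t. (s', t) \<in> R}. y (s', t)) \<ge> \<gamma> / 2}"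
    and tstar_def: "tstar = Min {t \<in> T. (\<Sum>t'\<in>{t'\<in>T. t' \<le> t}. \<Sum>s\<in>{s. (s, t') \<in> R}. y (s, t')) \<ge> \<gamma> / 2}"
  shows "{s \<in> S. s \<ge> sstar} \<times> {t \<in> T. t \<le> tstar} \<subseteq> R"
proof -
  have finR: "finite R" using RST finS finT by (meson finite_SigmaI finite_subset)
  have "R \<noteq> {}" using gamma_pos gamma_def by auto
  then obtain a b where ab: "(a,b) \<in> R" by auto
  hence aS: "a \<in> S" and bT: "b \<in> T" using RST by auto
  define MS where "MS = {s \<in> S. (\<Sum>s'\<in>{s'\<in>S. s' \<ge> s}. \<Sum>t\<in>{t. (s', t) \<in> R}. y (s', t)) \<ge> \<gamma> / 2}"
  define MT where "MT = {t \<in> T. (\<Sum>t'\<in>{t'\<in>T. t' \<le> t}. \<Sum>s\<in>{s. (s, t') \<in> R}. y (s, t')) \<ge> \<gamma> / 2}"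
  have RS: "{p\<in>R. fst p \<in> S} = R" "{p\<in>R. snd p \<in> T} = R" using RST by auto
  have "Min S \<in> MS"
  proof -
    have "{s'\<in>S. s' \<ge> Min S} = S" using finS by auto
    moreover have "Min S \<in> S" using finS aS by (auto intro: Min_in)
    ultimately show ?thesis unfolding MS_def using rowsum[OF finR finS, of y] RS gamma_def gamma_pos
      by auto
  qed
  hence MSne: "MS \<noteq> {}" by auto
  have "Max T \<in> MT"
  proof -
    have "{t'\<in>T. t' \<le> Max T} = T" using finT by auto
    moreover have "Max T \<in> T" using finT bT by (auto intro: Max_in)
    ultimately show ?thesis unfolding MT_def using colsum[OF finR finT, of y] RS gamma_def gamma_pos
      by auto
  qed
  hence MTne: "MT \<noteq> {}" by auto
  have finMS: "finite MS" "finite MT" using finS finT unfolding MS_def MT_def by auto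
  have ss: "sstar = Max MS" "tstar = Min MT" using sstar_def tstar_def MS_def MT_def by auto
  have sS: "sstar \<in> S" using Max_in[OF finMS(1) MSne] ss unfolding MS_def by auto
  have tT: "tstar \<in> T" using Min_in[OF finMS(2) MTne] ss unfolding MT_def by auto
  have small1: "(\<Sum>p\<in>{p\<in>R. fst p > sstar}. y p) < \<gamma>/2"
  proof (cases "\<exists>s\<in>S. s > sstar")
    case False
    hence e0: "{p\<in>R. fst p > sstar} = {}" using RST by force
    have "(\<Sum>p\<in>{p\<in>R. fst p > sstar}. y p) = 0" unfolding e0 by simp
    then show ?thesis using gamma_pos by simp
  next
    case True
    define s1 where "s1 = Min {s\<in>S. s > sstar}"
    have fin1: "finite {s\<in>S. s > sstar}" using finS by auto
    have s1in: "s1 \<in> S" "s1 > sstar" using Min_in[OF fin1] True unfolding s1_def by auto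
    have eqset: "{s'\<in>S. s' \<ge> s1} = {s'\<in>S. s' > sstar}"
    proof (intro set_eqI iffI)
      fix x assume "x \<in> {s'\<in>S. s' \<ge> s1}" thus "x \<in> {s'\<in>S. s' > sstar}" using s1in by auto
    next
      fix x assume "x \<in> {s'\<in>S. s' > sstar}" thus "x \<in> {s'\<in>S. s' \<ge> s1}"
        using Min_le[OF fin1, of x] unfolding s1_def by auto
    qed
    have "s1 \<notin> MS"
    proof
      assume "s1 \<in> MS" hence "s1 \<le> sstar" using Max_ge[OF finMS(1)] ss by simp
      thus False using s1in by simp
    qed
    hence "(\<Sum>s'\<in>{s'\<in>S. s' \<ge> s1}. \<Sum>t\<in>{t. (s', t) \<in> R}. y (s', t)) < \<gamma>/2"
      using s1in unfolding MS_def by auto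
    moreover have "(\<Sum>s'\<in>{s'\<in>S. s' \<ge> s1}. \<Sum>t\<in>{t. (s', t) \<in> R}. y (s', t))
        = (\<Sum>p\<in>{p\<in>R. fst p > sstar}. y p)"
    proof -
      have "{p\<in>R. fst p \<in> {s\<in>S. s > sstar}} = {p\<in>R. fst p > sstar}" using RST by auto
      thus ?thesis unfolding eqset using rowsum[OF finR fin1, of y] by simp
    qed
    ultimately show ?thesis by simp
  qed
  have small2: "(\<Sum>p\<in>{p\<in>R. snd p < tstar}. y p) < \<gamma>/2"
  proof (cases "\<exists>t\<in>T. t < tstar")
    case False
    hence e0: "{p\<in>R. snd p < tstar} = {}" using RST by force
    have "(\<Sum>p\<in>{p\<in>R. snd p < tstar}. y p) = 0" unfolding e0 by simp
    then show ?thesis using gamma_pos by simp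
  next
    case True
    define t1 where "t1 = Max {t\<in>T. t < tstar}"
    have fin1: "finite {t\<in>T. t < tstar}" using finT by auto
    have t1in: "t1 \<in> T" "t1 < tstar" using Max_in[OF fin1] True unfolding t1_def by auto
    have eqset: "{t'\<in>T. t' \<le> t1} = {t'\<in>T. t' < tstar}"
    proof (intro set_eqI iffI)
      fix x assume "x \<in> {t'\<in>T. t' \<le> t1}" thus "x \<in> {t'\<in>T. t' < tstar}" using t1in by auto
    next
      fix x assume "x \<in> {t'\<in>T. t' < tstar}" thus "x \<in> {t'\<in>T. t' \<le> t1}"
        using Max_ge[OF fin1, of x] unfolding t1_def by auto
    qed
    have "t1 \<notin> MT"
    proof
      assume "t1 \<in> MT" hence "tstar \<le> t1" using Min_le[OF finMS(2)] ss by simp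
      thus False using t1in by simp
    qed
    hence "(\<Sum>t'\<in>{t'\<in>T. t' \<le> t1}. \<Sum>s\<in>{s. (s, t') \<in> R}. y (s, t')) < \<gamma>/2"
      using t1in unfolding MT_def by auto
    moreover have "(\<Sum>t'\<in>{t'\<in>T. t' \<le> t1}. \<Sum>s\<in>{s. (s, t') \<in> R}. y (s, t'))
        = (\<Sum>p\<in>{p\<in>R. snd p < tstar}. y p)"
    proof -
      have "{p\<in>R. snd p \<in> {t\<in>T. t < tstar}} = {p\<in>R. snd p < tstar}" using RST by auto
      thus ?thesis unfolding eqset using colsum[OF finR fin1, of y] by simp
    qed
    ultimately show ?thesis by simp
  qed
  have key: "(sstar, tstar) \<in> R"
  proof (rule ccontr)
    assume nR: "(sstar, tstar) \<notin> R"
    have cov: "R = {p\<in>R. fst p > sstar} \<union> {p\<in>R. snd p < tstar}"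
    proof safe
      fix a b assume "(a,b) \<in> R" "\<not> snd (a,b) < tstar"
      moreover have "sstar < tstar" using ST sS tT by auto
      ultimately show "fst (a,b) > sstar" using Rclosed[of a b sstar tstar] sS tT nR
        by (cases "sstar < a") (auto simp: not_less)
    qed
    have f1: "finite {p\<in>R. fst p > sstar}" "finite {p\<in>R. snd p < tstar}" using finR by auto
    have "\<gamma> = (\<Sum>p\<in>{p\<in>R. fst p > sstar}. y p) + (\<Sum>p\<in>{p\<in>R. snd p < tstar}. y p)
             - (\<Sum>p\<in>{p\<in>R. fst p > sstar} \<inter> {p\<in>R. snd p < tstar}. y p)"
      using gamma_def sum_Un[OF f1, of y] cov by simp
    moreover have "(\<Sum>p\<in>{p\<in>R. fst p > sstar} \<inter> {p\<in>R. snd p < tstar}. y p) \<ge> 0"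
      using ynonneg by (intro sum_nonneg) auto
    ultimately show False using small1 small2 by linarith
  qed
  show ?thesis
  proof safe
    fix s t assume "s \<in> S" "sstar \<le> s" "t \<in> T" "t \<le> tstar"
    thus "(s,t) \<in> R" using Rclosed[OF key] ST by auto
  qed
qed

end
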